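(* Let $p$ be a prime and let $\sigma$ and $\alpha$ be cardinals with $m(\sigma)\le\alpha$ and $\alpha^\omega\le\sigma$. Then the topological group $\mathbb{Z}(p)^\sigma$ contains an independent $G_\delta$-dense subset $H$ such that the subgroup generated by $H$ (with the subspace topology) has property $\mathfrak{h}$.
   Context: $\mathbb{Z}(p)$ is the cyclic group of order $p$ (discrete), and $\mathbb{Z}(p)^\sigma$ carries the product topology. A subset of $\mathbb{Z}(p)^\sigma$ is independent if it is linearly independent over $\mathbb{Z}(p)$. A subset is $G_\delta$-dense if it meets every nonempty $G_\delta$-subset. For an infinite cardinal $\alpha$, $m(\alpha)$ is the least cardinality of a $G_\delta$-dense subset of a compact group of weight $\alpha$ (independent of the compact group chosen). A subgroup $N$ of a topological Abelian group $K$ is $h$-embedded if every homomorphism $N\to\mathbb{T}$ ($\mathbb{T}$ the circle group) extends to a continuous homomorphism $K\to\mathbb{T}$; $K$ has property $\mathfrak{h}$ if all its countable subgroups are $h$-embedded. *)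

theory Defs
  imports "HOL-Analysis.Analysis" "HOL-Algebra.Algebra" "HOL-Library.Equipollence"
begin

(* Z(p)^sigma: sigma is the cardinality of the index type 's; elements are functions
   's => nat with values in {..<p}, group operation pointwise addition mod p. *)
definition Zp_group :: "nat \<Rightarrow> ('s \<Rightarrow> nat) monoid" where
  "Zp_group p = \<lparr>carrier = {f. \<forall>i. f i < p}, mult = (\<lambda>f g i. (f i + g i) mod p), one = (\<lambda>i. 0)\<rparr>"

definition Zp_top :: "nat \<Rightarrow> ('s \<Rightarrow> nat) topology" where
  "Zp_top p = product_topology (\<lambda>_. discrete_topology {..<p}) UNIV"

definition Zp_independent :: "nat \<Rightarrow> ('s \<Rightarrow> nat) set \<Rightarrow> bool" where
  "Zp_independent p H \<longleftrightarrow>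
     (\<forall>F c. finite F \<and> F \<subseteq> H \<and> (\<forall>h\<in>F. c h < p) \<and> (\<forall>i. (\<Sum>h\<in>F. c h * h i) mod p = 0)
        \<longrightarrow> (\<forall>h\<in>F. c h = 0))"

definition Gdelta_dense :: "'a topology \<Rightarrow> 'a set \<Rightarrow> bool" where
  "Gdelta_dense T D \<longleftrightarrow> (\<forall>S. gdelta_in T S \<and> S \<noteq> {} \<longrightarrow> D \<inter> S \<noteq> {})"

definition topological_group :: "('g, 'b) monoid_scheme \<Rightarrow> 'g topology \<Rightarrow> bool" where
  "topological_group G T \<longleftrightarrow> group G \<and> topspace T = carrier G \<and> Hausdorff_space T \<and>
     continuous_map (prod_topology T T) T (\<lambda>(x, y). x \<otimes>\<^bsub>G\<^esub> y) \<and>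
     continuous_map T T (\<lambda>x. inv\<^bsub>G\<^esub> x)"

definition is_base :: "'a topology \<Rightarrow> 'a set set \<Rightarrow> bool" where
  "is_base T B \<longleftrightarrow> (\<forall>V\<in>B. openin T V) \<and> (\<forall>U. openin T U \<longrightarrow> (\<exists>C\<subseteq>B. \<Union>C = U))"

(* the weight of T is the cardinal |S| *)
definition has_weight :: "'a topology \<Rightarrow> 'k set \<Rightarrow> bool" where
  "has_weight T S \<longleftrightarrow> (\<exists>B. is_base T B \<and> B \<approx> S) \<and> (\<forall>B. is_base T B \<longrightarrow> S \<lesssim> B)"

definition circle_group :: "complex monoid" where
  "circle_group = \<lparr>carrier = sphere 0 1, mult = (*), one = 1\<rparr>"

definition h_embedded :: "('g, 'b) monoid_scheme \<Rightarrow> 'g topology \<Rightarrow> 'g set \<Rightarrow> bool" where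
  "h_embedded G T N \<longleftrightarrow>
     (\<forall>\<phi> \<in> hom (G\<lparr>carrier := N\<rparr>) circle_group.
        \<exists>\<psi> \<in> hom G circle_group. continuous_map T (top_of_set (sphere 0 1)) \<psi> \<and>
          (\<forall>x\<in>N. \<psi> x = \<phi> x))"

definition property_h :: "('g, 'b) monoid_scheme \<Rightarrow> 'g topology \<Rightarrow> bool" where
  "property_h G T \<longleftrightarrow> (\<forall>N. subgroup N G \<and> countable N \<longrightarrow> h_embedded G T N)"

end

theory Submission
  imports Defs "HOL-Computational_Algebra.Primes"
begin

lemma int_cl_idem:
  "T interior_of (T closure_of (T interior_of (T closure_of V))) = T interior_of (T closure_of V)"
proof
  let ?A = "T closure_of V"
  have "T closure_of (T interior_of ?A) \<subseteq> ?A"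
    by (simp add: closure_of_minimal interior_of_subset)
  then show "T interior_of (T closure_of (T interior_of ?A)) \<subseteq> T interior_of ?A"
    by (simp add: interior_of_mono)
  show "T interior_of ?A \<subseteq> T interior_of (T closure_of (T interior_of ?A))"
    by (simp add: closure_of_subset interior_of_maximal openin_subset)
qed

lemma dense_of_Gdelta_dense:
  assumes "Gdelta_dense T D"
  shows "T closure_of D = topspace T"
  unfolding dense_intersects_open
  using assms open_imp_gdelta_in unfolding Gdelta_dense_def by blast

lemma weight_lepoll:
  assumes "compact_space T" "Hausdorff_space T" "has_weight T (UNIV::'s set)"
    "Gdelta_dense T D" "D \<lesssim> (UNIV::'a set)"
  shows "(UNIV::'s set) \<lesssim> (UNIV :: 'a set set)"
proof -
  have reg: "regular_space T" using assms compact_Hausdorff_imp_regular_space by blast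
  have dense: "T closure_of D = topspace T" using dense_of_Gdelta_dense assms by blast
  define B where "B = {W. openin T W \<and> T interior_of (T closure_of W) = W}"
  have base: "is_base T B"
    unfolding is_base_def
  proof (intro conjI ballI allI impI)
    show "openin T V" if "V \<in> B" for V using that B_def by auto
    fix U assume U: "openin T U"
    show "\<exists>C\<subseteq>B. \<Union> C = U"
    proof (intro exI conjI)
      show "{W\<in>B. W \<subseteq> U} \<subseteq> B" by auto
      show "\<Union> {W\<in>B. W \<subseteq> U} = U"
      proof
        show "\<Union> {W\<in>B. W \<subseteq> U} \<subseteq> U" by auto
        show "U \<subseteq> \<Union> {W\<in>B. W \<subseteq> U}"
        proof
          fix x assume "x \<in> U"
          have nb: "neighbourhood_base_of (closedin T) T"
            using reg neighbourhood_base_of_closedin by blast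
          obtain V C where V: "openin T V" "closedin T C" "x \<in> V" "V \<subseteq> C" "C \<subseteq> U"
            using nb U \<open>x \<in> U\<close> unfolding neighbourhood_base_of by meson
          define W where "W = T interior_of (T closure_of V)"
          have "W \<in> B" unfolding B_def W_def by (simp add: int_cl_idem)
          moreover have "x \<in> W" unfolding W_def
            using V by (meson closure_of_subset in_mono interior_of_maximal openin_subset)
          moreover have "W \<subseteq> U" unfolding W_def
            using V by (meson closure_of_minimal dual_order.trans interior_of_subset)
          ultimately show "x \<in> \<Union> {W\<in>B. W \<subseteq> U}" by auto
        qed
      qed
    qed
  qed
  then have "(UNIV::'s set) \<lesssim> B" using assms(3) unfolding has_weight_def by blast
  also have "B \<lesssim> Pow D"
    unfolding lepoll_def
  proof (intro exI conjI)
    show "inj_on (\<lambda>W. W \<inter> D) B"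
    proof (rule inj_onI)
      fix W W' assume W: "W \<in> B" "W' \<in> B" "W \<inter> D = W' \<inter> D"
      have "T closure_of (W \<inter> D) = T closure_of W"
        using W(1) B_def dense closure_of_openin_Int_superset openin_subset by fastforce
      moreover have "T closure_of (W' \<inter> D) = T closure_of W'"
        using W(2) B_def dense closure_of_openin_Int_superset openin_subset by fastforce
      ultimately show "W = W'" using W B_def by (metis (mono_tags, lifting) mem_Collect_eq)
    qed
    show "(\<lambda>W. W \<inter> D) ` B \<subseteq> Pow D" by auto
  qed
  also have "Pow D \<lesssim> (UNIV :: 'a set set)"
  proof -
    obtain f :: "_ \<Rightarrow> 'a" where f: "inj_on f D" using assms(5) unfolding lepoll_def by blast
    show ?thesis unfolding lepoll_def
    proof (intro exI conjI)
      show "inj_on (\<lambda>S. f ` S) (Pow D)"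
        using f by (simp add: inj_on_def inj_on_image_eq_iff)
    qed auto
  qed
  finally show ?thesis .
qed


type_synonym 'a Yt = "(nat \<Rightarrow> 'a) \<times> (nat \<Rightarrow> (nat \<Rightarrow> bool) \<times> nat)"

definition rfun :: "nat \<Rightarrow> 'a set \<Rightarrow> 'a Yt \<Rightarrow> nat" where
 "rfun p A y = (if \<exists>k. fst (snd y k) = (\<lambda>n. fst y n \<in> A)
     then snd (snd y (LEAST k. fst (snd y k) = (\<lambda>n. fst y n \<in> A))) mod p else 0)"

definition rho :: "nat \<Rightarrow> ('s \<Rightarrow> 'a set) \<Rightarrow> ((nat \<Rightarrow> 'a Yt \<times> nat) \<Rightarrow> 's) \<Rightarrow> 's \<Rightarrow> 'a Yt \<Rightarrow> nat" where
 "rho p emb req i y = (if i \<in> range req \<and> y \<in> fst ` range (inv_into UNIV req i)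
     then snd (inv_into UNIV req i (LEAST k. fst (inv_into UNIV req i k) = y)) mod p else rfun p (emb i) y)"

lemma rho_lt: "p > 0 \<Longrightarrow> rho p emb req i y < p"
  unfolding rho_def rfun_def by auto

lemma realize_rows:
  assumes "inj req" "countable C"
  shows "\<exists>i. \<forall>y\<in>C. rho p emb req i y = a y mod p"
proof (cases "C = {}")
  case True then show ?thesis by auto
next
  case False
  define q where "q = (\<lambda>k. (from_nat_into C k, a (from_nat_into C k)))"
  have iq: "inv_into UNIV req (req q) = q" using assms(1) by simp
  have rC: "range (from_nat_into C) = C" using False assms(2) by (rule range_from_nat_into)
  show ?thesis
  proof (intro exI ballI)
    fix y assume y: "y \<in> C"
    have yr: "y \<in> fst ` range q" using rC y unfolding q_def by (auto simp: image_iff)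
    then have ex: "\<exists>k. fst (q k) = y" by auto
    have "fst (q (LEAST k. fst (q k) = y)) = y" using LeastI_ex[OF ex] .
    then have "snd (q (LEAST k. fst (q k) = y)) = a y" unfolding q_def by simp
    then show "rho p emb req (req q) y = a y mod p"
      unfolding rho_def iq using yr by auto
  qed
qed

lemma uncountable_nat_bool: "\<not> countable (UNIV :: (nat \<Rightarrow> bool) set)"
proof
  assume "countable (UNIV :: (nat \<Rightarrow> bool) set)"
  then have "range (from_nat_into (UNIV :: (nat \<Rightarrow> bool) set)) = UNIV"
    by (simp add: range_from_nat_into)
  then obtain n where "from_nat_into UNIV n = (\<lambda>m. \<not> from_nat_into (UNIV :: (nat \<Rightarrow> bool) set) m m)"
    by (metis UNIV_I imageE)
  then have "from_nat_into (UNIV :: (nat \<Rightarrow> bool) set) n n = (\<not> from_nat_into (UNIV :: (nat \<Rightarrow> bool) set) n n)"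
    by (rule fun_cong)
  then show False by simp
qed

lemma distinguishing_seq:
  assumes "inj emb" "countable J"
  shows "\<exists>b :: nat \<Rightarrow> 'a. \<forall>j\<in>J. \<forall>j'\<in>J. (\<lambda>n. b n \<in> emb j) = (\<lambda>n. b n \<in> emb j') \<longrightarrow> j = j'"
proof -
  define Z :: "'a set" where "Z = insert undefined (\<Union>j\<in>J. \<Union>j'\<in>J. {SOME z. (z \<in> emb j) \<noteq> (z \<in> emb j')})"
  have cZ: "countable Z" unfolding Z_def using assms(2) by (intro countable_insert countable_UN) auto
  have "Z \<noteq> {}" unfolding Z_def by (rule insert_not_empty)
  then have rZ: "range (from_nat_into Z) = Z" using cZ by (rule range_from_nat_into)
  show ?thesis
  proof (intro exI ballI impI)
    fix j j' assume jj: "j \<in> J" "j' \<in> J" "(\<lambda>n. from_nat_into Z n \<in> emb j) = (\<lambda>n. from_nat_into Z n \<in> emb j')"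
    show "j = j'"
    proof (rule ccontr)
      assume ne: "j \<noteq> j'"
      then have "emb j \<noteq> emb j'" using assms(1) by (meson injD)
      then have ex: "\<exists>z. (z \<in> emb j) \<noteq> (z \<in> emb j')" by blast
      define z where "z = (SOME z. (z \<in> emb j) \<noteq> (z \<in> emb j'))"
      have zd: "(z \<in> emb j) \<noteq> (z \<in> emb j')" unfolding z_def using someI_ex[OF ex] .
      have "z \<in> Z" unfolding Z_def z_def using jj(1,2) by blast
      then have "z \<in> range (from_nat_into Z)" using rZ by simp
      then obtain n where "from_nat_into Z n = z" by (rule rangeE) simp
      then show False using zd fun_cong[OF jj(3), of n] by simp
    qed
  qed
qed

lemma realize_cols:
  fixes emb :: "'s \<Rightarrow> 'a set" and req :: "(nat \<Rightarrow> 'a Yt \<times> nat) \<Rightarrow> 's"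
  assumes "inj emb" "countable J" "p > 0"
  shows "\<exists>y. \<forall>j\<in>J. rho p emb req j y = g j mod p"
proof (cases "J = {}")
  case True then show ?thesis by auto
next
  case False
  obtain b :: "nat \<Rightarrow> 'a" where b: "\<forall>j\<in>J. \<forall>j'\<in>J. (\<lambda>n. b n \<in> emb j) = (\<lambda>n. b n \<in> emb j') \<longrightarrow> j = j'"
    using distinguishing_seq[OF assms(1,2)] by blast
  define e where "e = from_nat_into J"
  have eJ: "e k \<in> J" for k unfolding e_def using False by (simp add: from_nat_into)
  have rJ: "range e = J" unfolding e_def using False assms(2) by (rule range_from_nat_into)
  define ys where "ys = (\<lambda>s :: nat \<Rightarrow> bool. (b, \<lambda>k. ((\<lambda>n. b n \<in> emb (e k)), g (e k) + p * (if s k then 1 else 0))))"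
  have rf: "rfun p (emb j) (ys s) = g j mod p" if j: "j \<in> J" for j s
  proof -
    obtain k where k: "e k = j" using rJ j by blast
    have ex: "\<exists>k. fst (snd (ys s) k) = (\<lambda>n. fst (ys s) n \<in> emb j)"
      using k unfolding ys_def by auto
    define k0 where "k0 = (LEAST k. fst (snd (ys s) k) = (\<lambda>n. fst (ys s) n \<in> emb j))"
    have "fst (snd (ys s) k0) = (\<lambda>n. fst (ys s) n \<in> emb j)" unfolding k0_def using LeastI_ex[OF ex] .
    then have "(\<lambda>n. b n \<in> emb (e k0)) = (\<lambda>n. b n \<in> emb j)" unfolding ys_def by simp
    then have "e k0 = j" using b eJ j by blast
    then have ek: "e k0 = j" .
    have "rfun p (emb j) (ys s) = snd (snd (ys s) k0) mod p"
      unfolding rfun_def k0_def by (rule if_P[OF ex])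
    also have "snd (snd (ys s) k0) = g j + p * (if s k0 then 1 else 0)"
      unfolding ys_def using ek by simp
    finally show ?thesis by simp
  qed
  have inj_ys: "inj ys"
  proof (rule injI)
    fix s s' assume "ys s = ys s'"
    then have "snd (snd (ys s) k) = snd (snd (ys s') k)" for k by simp
    then have H: "p * (if s k then 1 else 0) = p * (if s' k then 1 else 0)" for k
      unfolding ys_def by simp
    have "s k = s' k" for k using assms(3) H[of k] by (simp split: if_splits)
    then show "s = s'" by (rule ext)
  qed
  define E where "E = (\<Union>j\<in>J. fst ` range (inv_into UNIV req j))"
  have cE: "countable E" unfolding E_def using assms(2) by auto
  have "\<exists>s. ys s \<notin> E"
  proof (rule ccontr)
    assume "\<not> ?thesis"
    then have "range ys \<subseteq> E" by auto
    then have "countable (range ys)" using cE countable_subset by blast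
    then have "countable (UNIV :: (nat \<Rightarrow> bool) set)"
      using inj_ys by (metis countable_image_inj_eq)
    then show False using uncountable_nat_bool by blast
  qed
  then obtain s where s: "ys s \<notin> E" by blast
  show ?thesis
  proof (intro exI ballI)
    fix j assume j: "j \<in> J"
    have "ys s \<notin> fst ` range (inv_into UNIV req j)" using s j E_def by blast
    then show "rho p emb req j (ys s) = g j mod p" unfolding rho_def using rf[OF j] by simp
  qed
qed


lemma Zp_carrier: "carrier (Zp_group p) = {f. \<forall>i. f i < p}"
  by (simp add: Zp_group_def)
lemma Zp_mult: "x \<otimes>\<^bsub>Zp_group p\<^esub> y = (\<lambda>i. (x i + y i) mod p)"
  by (simp add: Zp_group_def)
lemma Zp_one: "\<one>\<^bsub>Zp_group p\<^esub> = (\<lambda>i. 0)"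
  by (simp add: Zp_group_def)

lemma Zp_group: assumes "p > 0" shows "group (Zp_group p :: ('s \<Rightarrow> nat) monoid)"
proof (rule groupI)
  fix x y :: "'s \<Rightarrow> nat" assume "x \<in> carrier (Zp_group p)" "y \<in> carrier (Zp_group p)"
  then show "x \<otimes>\<^bsub>Zp_group p\<^esub> y \<in> carrier (Zp_group p)"
    using assms by (simp add: Zp_carrier Zp_mult)
next
  show "\<one>\<^bsub>Zp_group p\<^esub> \<in> carrier (Zp_group p)" using assms by (simp add: Zp_carrier Zp_one)
next
  fix x y z :: "'s \<Rightarrow> nat"
  show "x \<otimes>\<^bsub>Zp_group p\<^esub> y \<otimes>\<^bsub>Zp_group p\<^esub> z = x \<otimes>\<^bsub>Zp_group p\<^esub> (y \<otimes>\<^bsub>Zp_group p\<^esub> z)"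
    by (simp add: Zp_mult mod_simps add.assoc)
next
  fix x :: "'s \<Rightarrow> nat" assume "x \<in> carrier (Zp_group p)"
  then show "\<one>\<^bsub>Zp_group p\<^esub> \<otimes>\<^bsub>Zp_group p\<^esub> x = x"
    by (simp add: Zp_carrier Zp_mult Zp_one)
next
  fix x :: "'s \<Rightarrow> nat" assume x: "x \<in> carrier (Zp_group p)"
  show "\<exists>y\<in>carrier (Zp_group p). y \<otimes>\<^bsub>Zp_group p\<^esub> x = \<one>\<^bsub>Zp_group p\<^esub>"
  proof (intro bexI)
    show "(\<lambda>i. ((p - 1) * x i) mod p) \<otimes>\<^bsub>Zp_group p\<^esub> x = \<one>\<^bsub>Zp_group p\<^esub>"
    proof -
      have "((p - 1) * x i mod p + x i) mod p = 0" for i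
      proof -
        have "((p - 1) * x i mod p + x i) mod p = ((p - 1) * x i + x i) mod p" by (simp add: mod_simps)
        also have "(p - 1) * x i + x i = p * x i" using assms by (simp add: algebra_simps)
        finally show ?thesis by simp
      qed
      then show ?thesis by (simp add: Zp_mult Zp_one)
    qed
    show "(\<lambda>i. ((p - 1) * x i) mod p) \<in> carrier (Zp_group p)" using assms by (simp add: Zp_carrier)
  qed
qed

lemma Zp_inv:
  assumes "p > 0" "x \<in> carrier (Zp_group p)"
  shows "inv\<^bsub>Zp_group p\<^esub> x = (\<lambda>i. ((p - 1) * x i) mod p)"
proof (rule group.inv_equality[OF Zp_group[OF assms(1)]])
  have "((p - 1) * x i mod p + x i) mod p = 0" for i
  proof -
    have "((p - 1) * x i mod p + x i) mod p = ((p - 1) * x i + x i) mod p" by (simp add: mod_simps)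
    also have "(p - 1) * x i + x i = p * x i" using assms by (simp add: algebra_simps)
    finally show ?thesis by simp
  qed
  then show "(\<lambda>i. ((p - 1) * x i) mod p) \<otimes>\<^bsub>Zp_group p\<^esub> x = \<one>\<^bsub>Zp_group p\<^esub>"
    by (simp add: Zp_mult Zp_one)
  show "x \<in> carrier (Zp_group p)" by fact
  show "(\<lambda>i. ((p - 1) * x i) mod p) \<in> carrier (Zp_group p)" using assms by (simp add: Zp_carrier)
qed

definition spanp :: "nat \<Rightarrow> ('s \<Rightarrow> nat) set \<Rightarrow> ('s \<Rightarrow> nat) set" where
  "spanp p H = {x. \<exists>F c. finite F \<and> F \<subseteq> H \<and> x = (\<lambda>i. (\<Sum>h\<in>F. c h * h i) mod p)}"

lemma spanpI: "finite F \<Longrightarrow> F \<subseteq> H \<Longrightarrow> x = (\<lambda>i. (\<Sum>h\<in>F. c h * h i) mod p) \<Longrightarrow> x \<in> spanp p H"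
  unfolding spanp_def by blast

lemma gen_span:
  assumes "p > 0" "H \<subseteq> carrier (Zp_group p)"
  shows "generate (Zp_group p) H \<subseteq> spanp p H"
proof
  fix x assume "x \<in> generate (Zp_group p) H"
  then show "x \<in> spanp p H"
  proof (induction rule: generate.induct)
    case one
    show ?case unfolding Zp_one by (rule spanpI[of "{}"]) auto
  next
    case (incl h)
    have "h i < p" for i using incl assms(2) by (auto simp: Zp_carrier)
    then have "h = (\<lambda>i. (\<Sum>h'\<in>{h}. 1 * h' i) mod p)" by (simp add: fun_eq_iff)
    then show ?case using incl by (intro spanpI[of "{h}" _ _ "\<lambda>_. 1"]) auto
  next
    case (inv h)
    have hc: "h \<in> carrier (Zp_group p)" using inv assms(2) by blast
    have "inv\<^bsub>Zp_group p\<^esub> h = (\<lambda>i. (\<Sum>h'\<in>{h}. (p - 1) * h' i) mod p)"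
      using Zp_inv[OF assms(1) hc] by simp
    then show ?case using inv by (intro spanpI[of "{h}" _ _ "\<lambda>_. p - 1"]) auto
  next
    case (eng x y)
    obtain F c where F: "finite F" "F \<subseteq> H" "x = (\<lambda>i. (\<Sum>h\<in>F. c h * h i) mod p)"
      using eng(3) unfolding spanp_def by blast
    obtain F' c' where F': "finite F'" "F' \<subseteq> H" "y = (\<lambda>i. (\<Sum>h\<in>F'. c' h * h i) mod p)"
      using eng(4) unfolding spanp_def by blast
    define c'' where "c'' = (\<lambda>h. (if h \<in> F then c h else 0) + (if h \<in> F' then c' h else 0))"
    have "(\<Sum>h\<in>F \<union> F'. c'' h * h i) = (\<Sum>h\<in>F. c h * h i) + (\<Sum>h\<in>F'. c' h * h i)" for i
    proof -
      have "(\<Sum>h\<in>F \<union> F'. c'' h * h i) = (\<Sum>h\<in>F \<union> F'. (if h \<in> F then c h * h i else 0)) + (\<Sum>h\<in>F \<union> F'. (if h \<in> F' then c' h * h i else 0))"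
        unfolding sum.distrib[symmetric] by (rule sum.cong) (auto simp: c''_def algebra_simps)
      also have "\<dots> = (\<Sum>h\<in>F. c h * h i) + (\<Sum>h\<in>F'. c' h * h i)"
        using F(1) F'(1) sum.inter_restrict[of "F \<union> F'" "\<lambda>h. c h * h i" F, symmetric]
          sum.inter_restrict[of "F \<union> F'" "\<lambda>h. c' h * h i" F', symmetric]
        by (simp add: Int_absorb1 Int_absorb2)
      finally show ?thesis .
    qed
    then have "x \<otimes>\<^bsub>Zp_group p\<^esub> y = (\<lambda>i. (\<Sum>h\<in>F \<union> F'. c'' h * h i) mod p)"
      unfolding Zp_mult F(3) F'(3) by (simp add: mod_simps)
    then show ?case using F F' by (intro spanpI[of "F \<union> F'" _ _ c'']) auto
  qed
qed


definition addp :: "nat \<Rightarrow> ('s \<Rightarrow> nat) \<Rightarrow> ('s \<Rightarrow> nat) \<Rightarrow> ('s \<Rightarrow> nat)" where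
  "addp p x y = (\<lambda>i. (x i + y i) mod p)"
definition smul :: "nat \<Rightarrow> nat \<Rightarrow> ('s \<Rightarrow> nat) \<Rightarrow> ('s \<Rightarrow> nat)" where
  "smul p t x = (\<lambda>i. (t * x i) mod p)"
definition subsp :: "nat \<Rightarrow> ('s \<Rightarrow> nat) set \<Rightarrow> bool" where
  "subsp p S \<longleftrightarrow> (\<forall>x\<in>S. \<forall>i. x i < p) \<and> (\<lambda>i. 0) \<in> S \<and> (\<forall>x\<in>S. \<forall>y\<in>S. addp p x y \<in> S)"
definition chr :: "nat \<Rightarrow> ('s \<Rightarrow> nat) set \<Rightarrow> (('s \<Rightarrow> nat) \<Rightarrow> complex) \<Rightarrow> bool" where
  "chr p S f \<longleftrightarrow> (\<forall>x\<in>S. f x \<in> sphere 0 1) \<and> (\<forall>x\<in>S. \<forall>y\<in>S. f (addp p x y) = f x * f y)"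

lemma smul_in:
  assumes "subsp p S" "x \<in> S"
  shows "smul p t x \<in> S"
proof (induction t)
  case 0
  then show ?case using assms unfolding subsp_def smul_def by simp
next
  case (Suc t)
  have "smul p (Suc t) x = addp p x (smul p t x)"
    unfolding smul_def addp_def by (simp add: mod_simps)
  then show ?case using Suc assms unfolding subsp_def by simp
qed

lemma key_int:
  fixes A B M t t' u p :: int
  assumes "(A + t*M) mod p = (B + t'*M) mod p" "(u*(t - t')) mod p = 1 mod p"
  shows "M mod p = (u*(B - A)) mod p"
proof -
  have d1: "p dvd (A + t*M) - (B + t'*M)" using assms(1) by (simp add: mod_eq_dvd_iff)
  have d2: "p dvd u*(t - t') - 1" using assms(2) by (simp add: mod_eq_dvd_iff)
  have "M - u*(B - A) = u*((A + t*M) - (B + t'*M)) - (u*(t - t') - 1) * M"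
    by (simp add: algebra_simps)
  also have "p dvd \<dots>" using d1 d2 by (simp add: dvd_diff)
  finally show ?thesis by (simp add: mod_eq_dvd_iff)
qed

lemma inv_mod_exists:
  assumes "Factorial_Ring.prime p" "0 < d" "d < p"
  shows "\<exists>u::nat. (int u * int d) mod int p = 1"
proof -
  have "\<not> p dvd d" using assms by (meson nat_dvd_not_less)
  then have "coprime p d" using assms(1) prime_imp_coprime by blast
  then have g: "gcd d p = 1" by (simp add: coprime_iff_gcd_eq_1 gcd.commute)
  obtain x y where "d * x = p * y + gcd d p" using bezout_nat[of d p] assms(2) by auto
  then have "d * x = p * y + 1" using g by simp
  then have "int d * int x = int p * int y + 1" by (metis of_nat_1 of_nat_add of_nat_mult)
  then have "(int x * int d) mod int p = 1 mod int p" by (simp add: algebra_simps)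
  also have "1 mod int p = 1" using prime_gt_1_nat[OF assms(1)] by simp
  finally show ?thesis by blast
qed

lemma uniq_coeff:
  assumes p: "Factorial_Ring.prime p" and S: "subsp p S" and sS: "s \<in> S" "s' \<in> S" and m: "\<forall>i. m i < p"
    and tt: "t' < t" "t < p"
    and eq: "addp p s (smul p t m) = addp p s' (smul p t' m)"
  shows "m \<in> S"
proof -
  have d: "0 < t - t'" "t - t' < p" using tt by auto
  obtain u where u: "(int u * int (t - t')) mod int p = 1" using inv_mod_exists[OF p d] by blast
  have p1: "p > 1" using prime_gt_1_nat[OF p] .
  have ltp: "\<forall>i. s i < p" "\<forall>i. s' i < p" using S sS unfolding subsp_def by auto
  have "m i = smul p u (addp p s' (smul p (p - 1) s)) i" for i
  proof -
    have "(s i + (t * m i) mod p) mod p = (s' i + (t' * m i) mod p) mod p"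
      using fun_cong[OF eq, of i] unfolding addp_def smul_def by simp
    then have "(s i + t * m i) mod p = (s' i + t' * m i) mod p" by (simp add: mod_simps)
    then have "int ((s i + t * m i) mod p) = int ((s' i + t' * m i) mod p)" by simp
    then have e1: "(int (s i) + int t * int (m i)) mod int p = (int (s' i) + int t' * int (m i)) mod int p"
      by (simp add: zmod_int)
    have e2: "(int u * (int t - int t')) mod int p = 1 mod int p" using u tt p1 by (simp add: of_nat_diff)
    have "int (m i) mod int p = (int u * (int (s' i) - int (s i))) mod int p"
      using key_int[OF e1 e2] .
    also have "\<dots> = (int u * (int (s' i) + (int p - 1) * int (s i))) mod int p"
    proof -
      have "int u * (int (s' i) + (int p - 1) * int (s i)) - int u * (int (s' i) - int (s i)) = int p * (int u * int (s i))"
        by (simp add: algebra_simps)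
      then have "int p dvd int u * (int (s' i) + (int p - 1) * int (s i)) - int u * (int (s' i) - int (s i))"
        by simp
      then show ?thesis by (metis dvd_minus_iff minus_diff_eq mod_eq_dvd_iff)
    qed
    also have "\<dots> = int ((u * (s' i + (p - 1) * s i)) mod p)"
      using p1 by (simp add: zmod_int of_nat_diff)
    finally have "int (m i mod p) = int ((u * (s' i + (p - 1) * s i)) mod p)" by (simp add: zmod_int)
    then have "m i mod p = (u * (s' i + (p - 1) * s i)) mod p" by (simp only: of_nat_eq_iff)
    then show ?thesis using m unfolding smul_def addp_def by (simp add: mod_simps)
  qed
  then have "m = smul p u (addp p s' (smul p (p - 1) s))" by (simp add: fun_eq_iff)
  moreover have "smul p u (addp p s' (smul p (p - 1) s)) \<in> S"
    using S sS smul_in unfolding subsp_def by blast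
  ultimately show ?thesis by simp
qed

lemma uniq_rep:
  assumes p: "Factorial_Ring.prime p" and S: "subsp p S" and sS: "s \<in> S" "s' \<in> S" and m: "\<forall>i. m i < p" "m \<notin> S"
    and tt: "t < p" "t' < p"
    and eq: "addp p s (smul p t m) = addp p s' (smul p t' m)"
  shows "s = s' \<and> t = t'"
proof -
  have tt': "t = t'"
  proof (rule ccontr)
    assume "t \<noteq> t'"
    then consider "t' < t" | "t < t'" by linarith
    then show False
    proof cases
      case 1 then show False using uniq_coeff[OF p S sS m(1) 1 tt(1) eq] m(2) by simp
    next
      case 2 then show False using uniq_coeff[OF p S sS(2,1) m(1) 2 tt(2) eq[symmetric]] m(2) by simp
    qed
  qed
  have ltp: "\<forall>i. s i < p" "\<forall>i. s' i < p" using S sS unfolding subsp_def by auto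
  have "s i = s' i" for i
  proof -
    have "(s i + (t * m i) mod p) mod p = (s' i + (t * m i) mod p) mod p"
      using fun_cong[OF eq, of i] tt' unfolding addp_def smul_def by simp
    then have "(s i + t * m i) mod p = (s' i + t * m i) mod p" by (simp add: mod_simps)
    then have "int ((s i + t * m i) mod p) = int ((s' i + t * m i) mod p)" by simp
    then have "(int (s i) + int (t * m i)) mod int p = (int (s' i) + int (t * m i)) mod int p"
      by (simp add: zmod_int)
    then have "int p dvd (int (s i) + int (t * m i)) - (int (s' i) + int (t * m i))"
      by (simp only: mod_eq_dvd_iff)
    then have "int p dvd int (s i) - int (s' i)" by simp
    then have "int (s i) mod int p = int (s' i) mod int p" by (simp only: mod_eq_dvd_iff)
    then show ?thesis using ltp by simp
  qed
  then show ?thesis using tt' by (simp add: fun_eq_iff)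
qed


lemma addp_smul_add:
  "addp p (addp p s (smul p t m)) (addp p s' (smul p t' m)) = addp p (addp p s s') (smul p ((t + t') mod p) m)"
proof -
  have "((s i + t*m i mod p) mod p + (s' i + t'*m i mod p) mod p) mod p = (s i + t*m i + (s' i + t'*m i)) mod p" for i
    by (simp add: mod_simps)
  moreover have "((s i + s' i) mod p + ((t + t') mod p * m i) mod p) mod p = (s i + s' i + (t + t')*m i) mod p" for i
    by (simp add: mod_simps)
  moreover have "s i + t*m i + (s' i + t'*m i) = s i + s' i + (t + t')*m i" for i
    by (simp add: algebra_simps)
  ultimately show ?thesis unfolding addp_def smul_def by (simp add: fun_eq_iff)
qed

lemma ext_step:
  assumes p: "Factorial_Ring.prime p" and K: "subsp p K" and S: "subsp p S" "S \<subseteq> K"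
    and f: "chr p S f" and m: "m \<in> K" "m \<notin> S"
  shows "\<exists>S' f'. subsp p S' \<and> S \<subseteq> S' \<and> S' \<subseteq> K \<and> m \<in> S' \<and> chr p S' f' \<and> (\<forall>x\<in>S. f' x = f x)"
proof -
  have p1: "p > 1" using prime_gt_1_nat[OF p] .
  have mlt: "\<forall>i. m i < p" using K m unfolding subsp_def by auto
  define S' where "S' = {z. \<exists>s t. s \<in> S \<and> t < p \<and> z = addp p s (smul p t m)}"
  have S'I: "z \<in> S'" if "s \<in> S" "t < p" "z = addp p s (smul p t m)" for z s t
    unfolding S'_def using that by blast
  define f' where "f' = (\<lambda>z. f (SOME s. s \<in> S \<and> (\<exists>t<p. z = addp p s (smul p t m))))"
  have f'eq: "f' (addp p s (smul p t m)) = f s" if "s \<in> S" "t < p" for s t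
  proof -
    have ex: "\<exists>s'. s' \<in> S \<and> (\<exists>t'<p. addp p s (smul p t m) = addp p s' (smul p t' m))"
      using that by blast
    define s0 where "s0 = (SOME s'. s' \<in> S \<and> (\<exists>t'<p. addp p s (smul p t m) = addp p s' (smul p t' m)))"
    have s0: "s0 \<in> S \<and> (\<exists>t'<p. addp p s (smul p t m) = addp p s0 (smul p t' m))"
      unfolding s0_def using someI_ex[OF ex] .
    then obtain t' where "t' < p" "addp p s (smul p t m) = addp p s0 (smul p t' m)" by blast
    then have "s = s0" using uniq_rep[OF p S(1) that(1) _ mlt m(2) that(2)] s0 by blast
    then show ?thesis unfolding f'_def s0_def by simp
  qed
  have slt: "\<forall>i. s i < p" if "s \<in> S" for s using S that unfolding subsp_def by auto
  have s_rep: "s = addp p s (smul p 0 m)" if "s \<in> S" for s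
    using slt[OF that] unfolding addp_def smul_def by (simp add: fun_eq_iff)
  show ?thesis
  proof (intro exI conjI)
    show "subsp p S'" unfolding subsp_def
    proof (intro conjI ballI allI)
      fix x i assume "x \<in> S'" then show "x i < p" using p1 unfolding S'_def addp_def by auto
    next
      have "(\<lambda>i. 0) \<in> S" using S unfolding subsp_def by blast
      moreover have "(\<lambda>i. 0) = addp p (\<lambda>i. 0) (smul p 0 m)" unfolding addp_def smul_def by simp
      ultimately show "(\<lambda>i. 0) \<in> S'" using p1 by (intro S'I[of "\<lambda>i. 0" 0]) auto
    next
      fix x y assume "x \<in> S'" "y \<in> S'"
      then obtain s t s' t' where st: "s \<in> S" "t < p" "x = addp p s (smul p t m)"
        "s' \<in> S" "t' < p" "y = addp p s' (smul p t' m)" unfolding S'_def by blast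
      have "addp p s s' \<in> S" using S st unfolding subsp_def by blast
      moreover have "(t + t') mod p < p" using p1 by simp
      ultimately show "addp p x y \<in> S'" unfolding st(3,6) addp_smul_add by (rule S'I) simp
    qed
    show "S \<subseteq> S'"
    proof
      fix s assume "s \<in> S" then show "s \<in> S'" using s_rep p1 by (intro S'I[of s 0]) auto
    qed
    show "S' \<subseteq> K"
    proof
      fix z assume "z \<in> S'"
      then obtain s t where st: "s \<in> S" "t < p" "z = addp p s (smul p t m)" unfolding S'_def by blast
      have "smul p t m \<in> K" using smul_in[OF K m(1)] .
      moreover have "s \<in> K" using st S by blast
      ultimately show "z \<in> K" using K st unfolding subsp_def by blast
    qed
    have "m = addp p (\<lambda>i. 0) (smul p 1 m)" using mlt unfolding addp_def smul_def by (simp add: fun_eq_iff)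
    moreover have "(\<lambda>i. 0) \<in> S" using S unfolding subsp_def by blast
    ultimately show "m \<in> S'" using p1 by (intro S'I[of "\<lambda>i. 0" 1]) auto
    show "chr p S' f'" unfolding chr_def
    proof (intro conjI ballI)
      fix x assume "x \<in> S'"
      then obtain s t where st: "s \<in> S" "t < p" "x = addp p s (smul p t m)" unfolding S'_def by blast
      show "f' x \<in> sphere 0 1" using f'eq[OF st(1,2)] st f unfolding chr_def by simp
    next
      fix x y assume "x \<in> S'" "y \<in> S'"
      then obtain s t s' t' where st: "s \<in> S" "t < p" "x = addp p s (smul p t m)"
        "s' \<in> S" "t' < p" "y = addp p s' (smul p t' m)" unfolding S'_def by blast
      have ss: "addp p s s' \<in> S" using S st unfolding subsp_def by blast
      have "f' (addp p x y) = f (addp p s s')"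
        unfolding st(3,6) addp_smul_add using f'eq[OF ss] p1 by simp
      also have "\<dots> = f s * f s'" using f st unfolding chr_def by blast
      also have "\<dots> = f' x * f' y" using f'eq st by simp
      finally show "f' (addp p x y) = f' x * f' y" .
    qed
    show "\<forall>x\<in>S. f' x = f x"
    proof
      fix s assume "s \<in> S"
      then show "f' s = f s" using f'eq[of s 0] s_rep p1 by simp
    qed
  qed
qed


definition gr :: "('x set) \<Rightarrow> ('x \<Rightarrow> 'y) \<Rightarrow> ('x \<times> 'y) set" where
  "gr S f = (\<lambda>x. (x, f x)) ` S"

lemma gr_mem: "(x, u) \<in> gr S f \<longleftrightarrow> x \<in> S \<and> u = f x"
  unfolding gr_def by auto

lemma fst_gr: "fst ` gr S f = S"
  unfolding gr_def by force

definition good :: "nat \<Rightarrow> ('s \<Rightarrow> nat) set \<Rightarrow> ('s \<Rightarrow> nat) set \<Rightarrow> (('s \<Rightarrow> nat) \<Rightarrow> complex) \<Rightarrow> ('s \<Rightarrow> nat) set \<Rightarrow> (('s \<Rightarrow> nat) \<Rightarrow> complex) \<Rightarrow> bool" where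
  "good p K N \<phi> S f \<longleftrightarrow> subsp p S \<and> N \<subseteq> S \<and> S \<subseteq> K \<and> chr p S f \<and> (\<forall>x\<in>N. f x = \<phi> x)"

lemma subsp_lt: "subsp p S \<Longrightarrow> x \<in> S \<Longrightarrow> x i < p" unfolding subsp_def by blast
lemma subsp_0: "subsp p S \<Longrightarrow> (\<lambda>i. 0) \<in> S" unfolding subsp_def by blast
lemma subsp_add: "subsp p S \<Longrightarrow> x \<in> S \<Longrightarrow> y \<in> S \<Longrightarrow> addp p x y \<in> S" unfolding subsp_def by blast
lemma good_D: "good p K N \<phi> S f \<Longrightarrow> subsp p S \<and> N \<subseteq> S \<and> S \<subseteq> K \<and> chr p S f \<and> (\<forall>x\<in>N. f x = \<phi> x)"
  unfolding good_def by blast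
lemma good_subsp: "good p K N \<phi> S f \<Longrightarrow> subsp p S" unfolding good_def by simp
lemma good_N: "good p K N \<phi> S f \<Longrightarrow> N \<subseteq> S" unfolding good_def by simp
lemma good_K: "good p K N \<phi> S f \<Longrightarrow> S \<subseteq> K" unfolding good_def by simp
lemma good_chr: "good p K N \<phi> S f \<Longrightarrow> chr p S f" unfolding good_def by simp
lemma good_phi: "good p K N \<phi> S f \<Longrightarrow> x \<in> N \<Longrightarrow> f x = \<phi> x" unfolding good_def by simp
lemma chr_sph: "chr p S f \<Longrightarrow> x \<in> S \<Longrightarrow> f x \<in> sphere 0 1" unfolding chr_def by blast
lemma chr_mult: "chr p S f \<Longrightarrow> x \<in> S \<Longrightarrow> y \<in> S \<Longrightarrow> f (addp p x y) = f x * f y" unfolding chr_def by blast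

lemma chain_union:
  fixes C :: "(('s \<Rightarrow> nat) \<times> complex) set set"
  assumes C: "C \<in> chains {G. \<exists>S f. G = gr S f \<and> good p K N \<phi> S f}" "C \<noteq> {}"
  shows "\<exists>S f. \<Union>C = gr S f \<and> good p K N \<phi> S f"
proof -
  let ?A = "{G. \<exists>S f. G = gr S f \<and> good p K N \<phi> S f}"
  have CA: "C \<subseteq> ?A" and ch: "\<forall>X1\<in>C. \<forall>Y1\<in>C. X1 \<subseteq> Y1 \<or> Y1 \<subseteq> X1"
    using C(1) unfolding chains_def chain_subset_def by auto
  have inC: "\<exists>S f. Xc = gr S f \<and> good p K N \<phi> S f" if "Xc \<in> C" for Xc
    using CA that by blast
  have two: "\<exists>S f. gr S f \<in> C \<and> good p K N \<phi> S f \<and> a \<in> gr S f \<and> b \<in> gr S f"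
    if ab: "a \<in> \<Union>C" "b \<in> \<Union>C" for a b
  proof -
    obtain Xc Yc where XY: "Xc \<in> C" "Yc \<in> C" "a \<in> Xc" "b \<in> Yc" using ab by blast
    have "\<exists>Zc\<in>C. a \<in> Zc \<and> b \<in> Zc"
    proof (cases "Xc \<subseteq> Yc")
      case True then show ?thesis using XY by blast
    next
      case False then have "Yc \<subseteq> Xc" using ch XY by blast
      then show ?thesis using XY by blast
    qed
    then obtain Zc where Zc: "Zc \<in> C" "a \<in> Zc" "b \<in> Zc" by blast
    obtain S f where "Zc = gr S f" "good p K N \<phi> S f" using inC[OF Zc(1)] by blast
    then show ?thesis using Zc by blast
  qed
  have func: "u = v" if xuv: "(x, u) \<in> \<Union>C" "(x, v) \<in> \<Union>C" for x u v
  proof -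
    obtain S f where "(x, u) \<in> gr S f" "(x, v) \<in> gr S f" using two[OF xuv] by blast
    then show ?thesis by (simp add: gr_mem)
  qed
  define S0 where "S0 = fst ` \<Union>C"
  define f0 where "f0 = (\<lambda>x. SOME u. (x, u) \<in> \<Union>C)"
  have f0eq: "f0 x = u" if "(x, u) \<in> \<Union>C" for x u
  proof -
    have "(x, f0 x) \<in> \<Union>C" unfolding f0_def using someI[of "\<lambda>u. (x, u) \<in> \<Union>C", OF that] .
    then show ?thesis using func that by blast
  qed
  have memS0: "\<exists>u. (x, u) \<in> \<Union>C" if xS0: "x \<in> S0" for x
  proof -
    obtain a where "a \<in> \<Union>C" "x = fst a" using xS0 unfolding S0_def by blast
    then show ?thesis by (metis prod.collapse)
  qed
  have eqU: "\<Union>C = gr S0 f0"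
  proof
    show "\<Union>C \<subseteq> gr S0 f0"
    proof
      fix a assume a: "a \<in> \<Union>C"
      obtain x u where xu: "a = (x, u)" by (rule prod.exhaust)
      have "(x, u) \<in> \<Union>C" using a xu by simp
      then have "f0 x = u" by (rule f0eq)
      moreover have "x \<in> S0" unfolding S0_def using imageI[OF a, of fst] xu by simp
      ultimately show "a \<in> gr S0 f0" using xu by (simp add: gr_mem)
    qed
    show "gr S0 f0 \<subseteq> \<Union>C"
    proof
      fix a assume "a \<in> gr S0 f0"
      then obtain x where x: "x \<in> S0" "a = (x, f0 x)" unfolding gr_def by blast
      obtain u where xu: "(x, u) \<in> \<Union>C" using memS0[OF x(1)] by blast
      have "f0 x = u" using xu by (rule f0eq)
      then show "a \<in> \<Union>C" using x(2) xu by simp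
    qed
  qed
  have loc: "\<exists>S f. good p K N \<phi> S f \<and> x \<in> S \<and> y \<in> S \<and> f0 x = f x \<and> f0 y = f y \<and> gr S f \<subseteq> \<Union>C"
    if xy0: "x \<in> S0" "y \<in> S0" for x y
  proof -
    obtain u where u: "(x, u) \<in> \<Union>C" using memS0[OF xy0(1)] ..
    obtain v where v: "(y, v) \<in> \<Union>C" using memS0[OF xy0(2)] ..
    note uv = u v
    obtain S f where Sf: "gr S f \<in> C" "good p K N \<phi> S f" "(x, u) \<in> gr S f" "(y, v) \<in> gr S f"
      using two[OF uv] by meson
    have "f0 x = u" using uv(1) by (rule f0eq)
    moreover have "f0 y = v" using uv(2) by (rule f0eq)
    moreover have "u = f x" "v = f y" using Sf(3,4) by (simp_all add: gr_mem)
    ultimately have e: "f0 x = f x" "f0 y = f y" by simp_all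
    have "gr S f \<subseteq> \<Union>C" using Sf(1) by blast
    moreover have "x \<in> S" "y \<in> S" using Sf(3,4) by (simp_all add: gr_mem)
    ultimately show ?thesis using Sf(2) e by (intro exI[of _ S] exI[of _ f]) simp
  qed
  obtain Xc where Xc: "Xc \<in> C" using C(2) by blast
  obtain SX fX where SX: "Xc = gr SX fX" "good p K N \<phi> SX fX" using inC[OF Xc] by blast
  have SXsub: "SX \<subseteq> S0" unfolding S0_def using Xc SX(1) fst_gr by (metis Union_upper image_mono)
  have fXeq: "f0 x = fX x" if xSX: "x \<in> SX" for x
  proof -
    have "(x, fX x) \<in> Xc" using SX(1) xSX by (simp add: gr_mem)
    then have "(x, fX x) \<in> \<Union>C" using Xc by blast
    then show ?thesis by (rule f0eq)
  qed
  have "good p K N \<phi> S0 f0"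
    unfolding good_def
  proof (intro conjI)
    show "subsp p S0" unfolding subsp_def
    proof (intro conjI ballI allI)
      fix x i assume x0: "x \<in> S0"
      obtain S f where Sf: "good p K N \<phi> S f" "x \<in> S" using loc[OF x0 x0] by meson
      show "x i < p" using subsp_lt[OF good_subsp[OF Sf(1)] Sf(2)] .
    next
      have "(\<lambda>i. 0) \<in> SX" using subsp_0[OF good_subsp[OF SX(2)]] .
      then show "(\<lambda>i. 0) \<in> S0" using SXsub by (rule subsetD[rotated])
    next
      fix x y assume xy: "x \<in> S0" "y \<in> S0"
      obtain S f where Sf: "good p K N \<phi> S f" "x \<in> S" "y \<in> S" "gr S f \<subseteq> \<Union>C" using loc[OF xy] by meson
      have "addp p x y \<in> S" using subsp_add[OF good_subsp[OF Sf(1)] Sf(2,3)] .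
      then have "(addp p x y, f (addp p x y)) \<in> \<Union>C" using Sf(4) by (auto simp: gr_def)
      then show "addp p x y \<in> S0" unfolding S0_def using imageI[of _ _ fst] by fastforce
    qed
    show "N \<subseteq> S0" using good_N[OF SX(2)] SXsub by (rule subset_trans)
    show "S0 \<subseteq> K"
    proof
      fix x assume x0: "x \<in> S0"
      obtain S f where Sf: "good p K N \<phi> S f" "x \<in> S" using loc[OF x0 x0] by meson
      show "x \<in> K" using good_K[OF Sf(1)] Sf(2) by (rule subsetD)
    qed
    show "chr p S0 f0" unfolding chr_def
    proof (intro conjI ballI)
      fix x assume x0: "x \<in> S0"
      obtain S f where Sf: "good p K N \<phi> S f" "x \<in> S" "f0 x = f x" using loc[OF x0 x0] by meson
      show "f0 x \<in> sphere 0 1" using chr_sph[OF good_chr[OF Sf(1)] Sf(2)] Sf(3) by simp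
    next
      fix x y assume xy: "x \<in> S0" "y \<in> S0"
      obtain S f where Sf: "good p K N \<phi> S f" "x \<in> S" "y \<in> S" "f0 x = f x" "f0 y = f y" "gr S f \<subseteq> \<Union>C"
        using loc[OF xy] by meson
      have a: "addp p x y \<in> S" using subsp_add[OF good_subsp[OF Sf(1)] Sf(2,3)] .
      then have "(addp p x y, f (addp p x y)) \<in> \<Union>C" using Sf(6) by (auto simp: gr_def)
      then have "f0 (addp p x y) = f (addp p x y)" by (rule f0eq)
      also have "\<dots> = f x * f y" using chr_mult[OF good_chr[OF Sf(1)] Sf(2,3)] .
      finally show "f0 (addp p x y) = f0 x * f0 y" using Sf by simp
    qed
    show "\<forall>x\<in>N. f0 x = \<phi> x"
    proof
      fix x assume xN: "x \<in> N"
      then have "x \<in> SX" using good_N[OF SX(2)] by (rule subsetD[rotated])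
      then show "f0 x = \<phi> x" using fXeq good_phi[OF SX(2) xN] by simp
    qed
  qed
  then show ?thesis using eqU by blast
qed

lemma ext_char:
  assumes p: "Factorial_Ring.prime p" and K: "subsp p K" and N: "subsp p N" "N \<subseteq> K"
    and phi: "chr p N \<phi>"
  shows "\<exists>ch. chr p K ch \<and> (\<forall>x\<in>N. ch x = \<phi> x)"
proof -
  define A where "A = {G. \<exists>S f. G = gr S f \<and> good p K N \<phi> S f}"
  have gN: "good p K N \<phi> N \<phi>" unfolding good_def using N phi by auto
  have "\<forall>C\<in>chains A. \<exists>U\<in>A. \<forall>Xc\<in>C. Xc \<subseteq> U"
  proof
    fix C assume C: "C \<in> chains A"
    show "\<exists>U\<in>A. \<forall>Xc\<in>C. Xc \<subseteq> U"
    proof (cases "C = {}")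
      case True
      have "gr N \<phi> \<in> A" unfolding A_def using gN by blast
      then show ?thesis using True by blast
    next
      case False
      obtain S f where "\<Union>C = gr S f" "good p K N \<phi> S f" using chain_union[OF C[unfolded A_def] False] by blast
      then have "\<Union>C \<in> A" unfolding A_def by blast
      then show ?thesis by blast
    qed
  qed
  then obtain M where M: "M \<in> A" "\<forall>Xc\<in>A. M \<subseteq> Xc \<longrightarrow> Xc = M" by (rule Zorn_Lemma2[elim_format]) blast
  obtain S f where Sf: "M = gr S f" "good p K N \<phi> S f" using M(1) unfolding A_def by blast
  have "S = K"
  proof (rule ccontr)
    assume "S \<noteq> K"
    then obtain m where m: "m \<in> K" "m \<notin> S" using Sf(2) unfolding good_def by blast
    have gS: "subsp p S" "S \<subseteq> K" "chr p S f" using Sf(2) unfolding good_def by auto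
    obtain S' f' where S': "subsp p S'" "S \<subseteq> S'" "S' \<subseteq> K" "m \<in> S'" "chr p S' f'" "\<forall>x\<in>S. f' x = f x"
      using ext_step[OF p K gS(1,2,3) m] by blast
    have "good p K N \<phi> S' f'" unfolding good_def using S' Sf(2) unfolding good_def by auto
    then have "gr S' f' \<in> A" unfolding A_def by blast
    moreover have "M \<subseteq> gr S' f'" unfolding Sf(1) gr_def using S'(2,6) by auto
    ultimately have "gr S' f' = M" using M(2) by blast
    then have "fst ` gr S' f' = fst ` gr S f" using Sf(1) by simp
    then have "S' = S" by (simp add: fst_gr)
    then show False using m S'(4) by simp
  qed
  then show ?thesis using Sf(2) unfolding good_def by blast
qed


definition ze :: "nat \<Rightarrow> nat \<Rightarrow> complex" where
  "ze p j = cis (2 * pi / real p) ^ j"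

lemma ze_norm: "ze p j \<in> sphere 0 1"
  unfolding ze_def by (simp add: norm_power)

lemma ze_add: "ze p (a + b) = ze p a * ze p b"
  unfolding ze_def by (simp add: power_add)

lemma ze_p: assumes "p > 0" shows "ze p p = 1"
proof -
  have "ze p p = cis (real p * (2 * pi / real p))" unfolding ze_def by (rule Complex.DeMoivre)
  also have "real p * (2 * pi / real p) = 2 * pi" using assms by simp
  finally show ?thesis by simp
qed

lemma ze_mod: assumes "p > 0" shows "ze p (j mod p) = ze p j"
proof -
  have "ze p j = ze p (p * (j div p) + j mod p)" by simp
  also have "\<dots> = ze p (p * (j div p)) * ze p (j mod p)" by (rule ze_add)
  also have "ze p (p * (j div p)) = 1"
    unfolding ze_def power_mult using ze_p[OF assms] unfolding ze_def by simp
  finally show ?thesis by simp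
qed

lemma ze_root:
  assumes "p > 0" "w ^ p = 1"
  shows "\<exists>j<p. w = ze p j"
proof -
  have "w \<in> {z. z ^ p = 1}" using assms by simp
  then obtain k where k: "k \<in> {..<p}" "w = cis (2 * pi * real k / real p)"
    using Complex.bij_betw_roots_unity[OF assms(1)] unfolding bij_betw_def by auto
  have "ze p k = cis (real k * (2 * pi / real p))" unfolding ze_def by (rule Complex.DeMoivre)
  also have "\<dots> = w" using k by (simp add: field_simps)
  finally show ?thesis using k by auto
qed

lemma cylinder:
  assumes "gdelta_in (Zp_top p) S" "g \<in> S"
  shows "\<exists>J. countable J \<and> (\<forall>f. (\<forall>i. f i < p) \<and> (\<forall>j\<in>J. f j = g j) \<longrightarrow> f \<in> S)"
proof -
  have top: "topspace (Zp_top p) = {f. \<forall>i. f i < p}"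
    unfolding Zp_top_def by (auto simp: PiE_UNIV_domain)
  obtain U where U: "countable U" "U \<subseteq> Collect (openin (Zp_top p))" "\<Inter>U = S"
    using assms(1) unfolding gdelta_in_alt intersection_of_def by blast
  have gU: "g \<in> W" if "W \<in> U" for W using assms(2) U(3) that by blast
  have ex: "\<exists>V. finite {i. V i \<noteq> {..<p}} \<and> g \<in> Pi\<^sub>E UNIV V \<and> Pi\<^sub>E UNIV V \<subseteq> W" if WU: "W \<in> U" for W
  proof -
    have "openin (Zp_top p) W" using U(2) WU by blast
    then obtain V where "finite {i \<in> UNIV. V i \<noteq> topspace (discrete_topology {..<p})}"
      "g \<in> Pi\<^sub>E UNIV V" "Pi\<^sub>E UNIV V \<subseteq> W"
      using gU[OF WU] unfolding Zp_top_def openin_product_topology_alt by meson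
    then show ?thesis by auto
  qed
  define VV where "VV = (\<lambda>W. SOME V. finite {i. V i \<noteq> {..<p}} \<and> g \<in> Pi\<^sub>E UNIV V \<and> Pi\<^sub>E UNIV V \<subseteq> W)"
  have VV: "finite {i. VV W i \<noteq> {..<p}} \<and> g \<in> Pi\<^sub>E UNIV (VV W) \<and> Pi\<^sub>E UNIV (VV W) \<subseteq> W" if "W \<in> U" for W
    unfolding VV_def using someI_ex[OF ex[OF that]] .
  define J where "J = (\<Union>W\<in>U. {i. VV W i \<noteq> {..<p}})"
  have cJ: "countable J" unfolding J_def
  proof (rule countable_UN[OF U(1)])
    fix W assume "W \<in> U"
    then show "countable {i. VV W i \<noteq> {..<p}}" using VV countable_finite by blast
  qed
  show ?thesis
  proof (intro exI conjI allI impI)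
    show "countable J" by (rule cJ)
    fix f assume f: "(\<forall>i. f i < p) \<and> (\<forall>j\<in>J. f j = g j)"
    have "f \<in> W" if W: "W \<in> U" for W
    proof -
      have "f i \<in> VV W i" for i
      proof (cases "VV W i = {..<p}")
        case True then show ?thesis using f by simp
      next
        case False
        then have "i \<in> J" unfolding J_def using W by blast
        then have "f i = g i" using f by blast
        moreover have "g i \<in> VV W i" using VV[OF W] by (auto simp: PiE_UNIV_domain)
        ultimately show ?thesis by simp
      qed
      then have "f \<in> Pi\<^sub>E UNIV (VV W)" by (simp add: PiE_UNIV_domain)
      then show ?thesis using VV[OF W] by blast
    qed
    then show "f \<in> S" using U(3) by blast
  qed
qed

definition p2 :: "(nat \<Rightarrow> 'x) \<Rightarrow> (nat \<Rightarrow> 'x) \<Rightarrow> (nat \<Rightarrow> 'x)" where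
  "p2 f g = (\<lambda>n. if even n then f (n div 2) else g (n div 2))"

lemma p2_inj: assumes "p2 f g = p2 f' g'" shows "f = f' \<and> g = g'"
proof -
  have "f n = f' n" for n using fun_cong[OF assms, of "2 * n"] unfolding p2_def by simp
  moreover have "g n = g' n" for n using fun_cong[OF assms, of "2 * n + 1"] unfolding p2_def by simp
  ultimately show ?thesis by (simp add: fun_eq_iff)
qed

definition sq :: "(nat \<Rightarrow> nat \<Rightarrow> 'x) \<Rightarrow> (nat \<Rightarrow> 'x)" where
  "sq F = (\<lambda>n. case prod_decode n of (a, b) \<Rightarrow> F a b)"

lemma sq_inj: assumes "sq F = sq F'" shows "F = F'"
proof -
  have "F a b = F' a b" for a b
    using fun_cong[OF assms, of "prod_encode (a, b)"] unfolding sq_def by simp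
  then show ?thesis by (simp add: fun_eq_iff)
qed

lemma enc_exists:
  fixes a0 a1 :: 'a
  assumes "a0 \<noteq> a1"
  shows "\<exists>enc :: (nat \<Rightarrow> ((nat \<Rightarrow> 'a) \<times> (nat \<Rightarrow> (nat \<Rightarrow> bool) \<times> nat)) \<times> nat) \<Rightarrow> (nat \<Rightarrow> 'a). inj enc"
proof -
  define nb :: "nat \<Rightarrow> nat \<Rightarrow> bool" where "nb v = (\<lambda>j. j < v)" for v
  have nb_inj: "v = v'" if "nb v = nb v'" for v v'
  proof (rule ccontr)
    assume "v \<noteq> v'"
    then have "v < v' \<or> v' < v" by linarith
    then show False using fun_cong[OF that, of "min v v'"] unfolding nb_def by auto
  qed
  define bA :: "(nat \<Rightarrow> bool) \<Rightarrow> nat \<Rightarrow> 'a" where "bA f = (\<lambda>n. if f n then a1 else a0)" for f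
  have bA_inj: "f = f'" if "bA f = bA f'" for f f'
  proof -
    have "f n = f' n" for n using fun_cong[OF that, of n] assms unfolding bA_def by (auto split: if_splits)
    then show ?thesis by (simp add: fun_eq_iff)
  qed
  define epv :: "(nat \<Rightarrow> bool) \<times> nat \<Rightarrow> nat \<Rightarrow> bool" where "epv x = p2 (fst x) (nb (snd x))" for x
  have epv_inj: "x = x'" if "epv x = epv x'" for x x'
  proof -
    have e: "fst x = fst x'" "nb (snd x) = nb (snd x')"
      using p2_inj[OF that[unfolded epv_def]] by auto
    have "snd x = snd x'" using nb_inj[OF e(2)] .
    then show ?thesis using e(1) by (rule prod_eqI[rotated])
  qed
  define epi :: "(nat \<Rightarrow> (nat \<Rightarrow> bool) \<times> nat) \<Rightarrow> nat \<Rightarrow> bool" where "epi \<pi> = sq (\<lambda>k. epv (\<pi> k))" for \<pi>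
  have epi_inj: "\<pi> = \<pi>'" if "epi \<pi> = epi \<pi>'" for \<pi> \<pi>'
  proof -
    have "(\<lambda>k. epv (\<pi> k)) = (\<lambda>k. epv (\<pi>' k))" using sq_inj that unfolding epi_def by blast
    then have "epv (\<pi> k) = epv (\<pi>' k)" for k by (rule fun_cong)
    then have "\<pi> k = \<pi>' k" for k using epv_inj by blast
    then show ?thesis by (rule ext)
  qed
  define ey :: "(nat \<Rightarrow> 'a) \<times> (nat \<Rightarrow> (nat \<Rightarrow> bool) \<times> nat) \<Rightarrow> nat \<Rightarrow> 'a" where
    "ey y = p2 (fst y) (bA (epi (snd y)))" for y
  have ey_inj: "y = y'" if "ey y = ey y'" for y y'
  proof -
    have e: "fst y = fst y'" "bA (epi (snd y)) = bA (epi (snd y'))"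
      using p2_inj[OF that[unfolded ey_def]] by auto
    have "snd y = snd y'" using epi_inj[OF bA_inj[OF e(2)]] .
    then show ?thesis using e(1) by (rule prod_eqI[rotated])
  qed
  define eyv where "eyv x = p2 (ey (fst x)) (bA (nb (snd x)))" for x
  have eyv_inj: "x = x'" if "eyv x = eyv x'" for x x'
  proof -
    have e: "ey (fst x) = ey (fst x')" "bA (nb (snd x)) = bA (nb (snd x'))"
      using p2_inj[OF that[unfolded eyv_def]] by auto
    have "fst x = fst x'" using e(1) by (rule ey_inj)
    moreover have "snd x = snd x'" using nb_inj[OF bA_inj[OF e(2)]] .
    ultimately show ?thesis by (rule prod_eqI)
  qed
  define enc where "enc q = sq (\<lambda>k. eyv (q k))" for q
  have "inj enc"
  proof (rule injI)
    fix q q' assume "enc q = enc q'"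
    then have "(\<lambda>k. eyv (q k)) = (\<lambda>k. eyv (q' k))" using sq_inj unfolding enc_def by blast
    then have "eyv (q k) = eyv (q' k)" for k by (rule fun_cong)
    then have "q k = q' k" for k using eyv_inj by blast
    then show "q = q'" by (rule ext)
  qed
  then show ?thesis by blast
qed


lemma smul_Suc: "smul p (Suc t) x = addp p x (smul p t x)"
  unfolding smul_def addp_def by (simp add: mod_simps)

lemma chr_zero:
  assumes "chr p K w" "subsp p K"
  shows "w (\<lambda>i. 0) = 1"
proof -
  have z: "(\<lambda>i. 0) \<in> K" using subsp_0[OF assms(2)] .
  have eq: "addp p (\<lambda>i. 0) (\<lambda>i. 0) = (\<lambda>i. 0)" unfolding addp_def by simp
  have "w (\<lambda>i. 0) = w (\<lambda>i. 0) * w (\<lambda>i. 0)" using chr_mult[OF assms(1) z z, unfolded eq] .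
  moreover have "w (\<lambda>i. 0) \<noteq> 0" using chr_sph[OF assms(1) z] by auto
  ultimately show ?thesis by auto
qed

lemma chr_smul:
  assumes "chr p K w" "subsp p K" "x \<in> K"
  shows "w (smul p t x) = w x ^ t"
proof (induction t)
  case 0
  have "smul p 0 x = (\<lambda>i. 0)" unfolding smul_def by simp
  then show ?case using chr_zero[OF assms(1,2)] by simp
next
  case (Suc t)
  have "w (smul p (Suc t) x) = w x * w (smul p t x)"
    unfolding smul_Suc using chr_mult[OF assms(1) assms(3) smul_in[OF assms(2,3)]] .
  then show ?case using Suc by simp
qed

lemma chr_sum:
  assumes "chr p K w" "subsp p K" "finite F" "F \<subseteq> K"
  shows "(\<lambda>i. (\<Sum>h\<in>F. c h * h i) mod p) \<in> K \<and> w (\<lambda>i. (\<Sum>h\<in>F. c h * h i) mod p) = (\<Prod>h\<in>F. w h ^ c h)"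
  using assms(3,4)
proof (induction F rule: finite_induct)
  case empty
  then show ?case using chr_zero[OF assms(1,2)] subsp_0[OF assms(2)] by simp
next
  case (insert h F)
  have hK: "h \<in> K" using insert by blast
  have IH: "(\<lambda>i. (\<Sum>h\<in>F. c h * h i) mod p) \<in> K" "w (\<lambda>i. (\<Sum>h\<in>F. c h * h i) mod p) = (\<Prod>h\<in>F. w h ^ c h)"
    using insert by auto
  have eq: "(\<lambda>i. (\<Sum>h\<in>insert h F. c h * h i) mod p) = addp p (smul p (c h) h) (\<lambda>i. (\<Sum>h\<in>F. c h * h i) mod p)"
    using insert(1,2) unfolding addp_def smul_def by (simp add: mod_simps)
  have sK: "smul p (c h) h \<in> K" using smul_in[OF assms(2) hK] .
  show ?case
  proof
    show "(\<lambda>i. (\<Sum>h\<in>insert h F. c h * h i) mod p) \<in> K" unfolding eq using subsp_add[OF assms(2) sK IH(1)] .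
    have "w (\<lambda>i. (\<Sum>h\<in>insert h F. c h * h i) mod p) = w (smul p (c h) h) * w (\<lambda>i. (\<Sum>h\<in>F. c h * h i) mod p)"
      unfolding eq using chr_mult[OF assms(1) sK IH(1)] .
    also have "\<dots> = w h ^ c h * (\<Prod>h\<in>F. w h ^ c h)" using chr_smul[OF assms(1,2) hK] IH(2) by simp
    also have "\<dots> = (\<Prod>h\<in>insert h F. w h ^ c h)" using insert(1,2) by simp
    finally show "w (\<lambda>i. (\<Sum>h\<in>insert h F. c h * h i) mod p) = (\<Prod>h\<in>insert h F. w h ^ c h)" .
  qed
qed

lemma root_of_chr:
  assumes "chr p K w" "subsp p K" "x \<in> K" "p > 0"
  shows "\<exists>j<p. w x = ze p j"
proof -
  have "smul p p x = (\<lambda>i. 0)" unfolding smul_def by simp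
  then have "w x ^ p = 1" using chr_smul[OF assms(1,2,3), of p] chr_zero[OF assms(1,2)] by simp
  then show ?thesis using ze_root[OF assms(4)] by blast
qed

lemma psi_chr:
  assumes "p > 0"
  shows "chr p S (\<lambda>x. ze p (x i))"
  unfolding chr_def addp_def using ze_norm ze_mod[OF assms] ze_add by simp

lemma psi_cont:
  "continuous_map (subtopology (Zp_top p) K) (top_of_set (sphere 0 1)) (\<lambda>x. ze p (x i))"
proof -
  have c1: "continuous_map (Zp_top p) (discrete_topology {..<p}) (\<lambda>x. x i)"
    unfolding Zp_top_def using continuous_map_product_projection[of i UNIV "\<lambda>_. discrete_topology {..<p}"] by simp
  have c2: "continuous_map (discrete_topology {..<p}) (top_of_set (sphere 0 1)) (ze p)"
    using ze_norm by simp
  have "continuous_map (Zp_top p) (top_of_set (sphere 0 1)) (ze p \<circ> (\<lambda>x. x i))"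
    using continuous_map_compose[OF c1 c2] .
  then show ?thesis by (simp add: o_def continuous_map_from_subtopology)
qed


theorem proposition3p4:
  fixes p :: nat
    and G :: "('g, 'b) monoid_scheme" and T :: "'g topology" and D :: "'g set"
  assumes "Factorial_Ring.prime p"
    and "infinite (UNIV :: 's set)"
    \<comment> \<open>m(sigma) <= alpha: some compact group of weight sigma has a G_delta-dense subset of size <= alpha\<close>
    and "topological_group G T" and "compact_space T" and "has_weight T (UNIV :: 's set)"
    and "D \<subseteq> carrier G" and "Gdelta_dense T D" and "D \<lesssim> (UNIV :: 'a set)"
    \<comment> \<open>alpha^omega <= sigma\<close>
    and "(UNIV :: (nat \<Rightarrow> 'a) set) \<lesssim> (UNIV :: 's set)"
  shows "\<exists>H :: ('s \<Rightarrow> nat) set. H \<subseteq> carrier (Zp_group p) \<and> Zp_independent p H \<and>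
           Gdelta_dense (Zp_top p) H \<and>
           property_h ((Zp_group p)\<lparr>carrier := generate (Zp_group p) H\<rparr>)
                      (subtopology (Zp_top p) (generate (Zp_group p) H))"
proof -
  have p: "Factorial_Ring.prime p" using assms(1) .
  have p1: "p > 1" using prime_gt_1_nat[OF p] .
  have p0: "p > 0" using p1 by simp
  have Haus: "Hausdorff_space T" using assms(3) unfolding topological_group_def by blast
  have "(UNIV::'s set) \<lesssim> (UNIV::'a set set)"
    using weight_lepoll[OF assms(4) Haus assms(5) assms(7) assms(8)] .
  then obtain emb :: "'s \<Rightarrow> 'a set" where emb: "inj emb" unfolding lepoll_def by auto
  have "\<exists>a0 a1 :: 'a. a0 \<noteq> a1"
  proof (rule ccontr)
    assume "\<not> (\<exists>a0 a1 :: 'a. a0 \<noteq> a1)"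
    then have all: "\<And>a b :: 'a. a = b" by blast
    have "(UNIV :: 'a set set) \<subseteq> {{}, UNIV}"
    proof
      fix A :: "'a set"
      show "A \<in> {{}, UNIV}"
      proof (cases "A = {}")
        case False
        then obtain a where "a \<in> A" by blast
        then have "x \<in> A" for x using all[of x a] by simp
        then have "A = UNIV" by auto
        then show ?thesis by simp
      qed simp
    qed
    then have "finite (UNIV :: 'a set set)" using finite_subset by blast
    then have "finite (range emb)" by (rule finite_subset[OF subset_UNIV])
    then have "finite (UNIV :: 's set)" using emb by (rule finite_imageD)
    then show False using assms(2) by simp
  qed
  then obtain a0 a1 :: 'a where a01: "a0 \<noteq> a1" by blast
  obtain enc :: "(nat \<Rightarrow> 'a Yt \<times> nat) \<Rightarrow> (nat \<Rightarrow> 'a)" where enc: "inj enc"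
    using enc_exists[OF a01] ..
  obtain g :: "(nat \<Rightarrow> 'a) \<Rightarrow> 's" where g: "inj g" using assms(9) unfolding lepoll_def by auto
  define req where "req = g \<circ> enc"
  have req: "inj req" unfolding req_def using inj_compose[OF g enc] .
  define hf where "hf = (\<lambda>(y :: 'a Yt) (i :: 's). rho p emb req i y)"
  define H where "H = range hf"
  have hfi: "hf y i = rho p emb req i y" for y i unfolding hf_def by simp
  have Hc: "H \<subseteq> carrier (Zp_group p)" unfolding H_def Zp_carrier hf_def using rho_lt[OF p0] by auto
  define yh where "yh = (\<lambda>h. SOME y. hf y = h)"
  have yh: "hf (yh h) = h" if "h \<in> H" for h
  proof -
    have "\<exists>y. hf y = h" using that unfolding H_def by blast
    then show ?thesis unfolding yh_def by (rule someI_ex)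
  qed
  have indep: "Zp_independent p H"
    unfolding Zp_independent_def
  proof (intro allI impI ballI)
    fix F c h0
    assume A: "finite F \<and> F \<subseteq> H \<and> (\<forall>h\<in>F. c h < p) \<and> (\<forall>i. (\<Sum>h\<in>F. c h * h i) mod p = 0)"
      and h0: "h0 \<in> F"
    define a where "a = (\<lambda>y. if y = yh h0 then 1 else 0 :: nat)"
    have "countable (yh ` F)" using A by (simp add: countable_finite)
    then obtain i where i: "\<forall>y\<in>yh ` F. rho p emb req i y = a y mod p"
      using realize_rows[OF req] by blast
    have hi: "h i = (if h = h0 then 1 else 0)" if hF: "h \<in> F" for h
    proof -
      have hH: "h \<in> H" "h0 \<in> H" using A hF h0 by auto
      have "h i = rho p emb req i (yh h)" using yh[OF hH(1)] hfi by metis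
      also have "\<dots> = a (yh h) mod p" using i hF by blast
      also have "(yh h = yh h0) \<longleftrightarrow> (h = h0)" using yh[OF hH(1)] yh[OF hH(2)] by metis
      then have "a (yh h) mod p = (if h = h0 then 1 else 0)" unfolding a_def using p1 by simp
      finally show ?thesis .
    qed
    have "(\<Sum>h\<in>F. c h * h i) = (\<Sum>h\<in>F. if h = h0 then c h else 0)"
      by (rule sum.cong) (auto simp: hi)
    also have "\<dots> = c h0" using A h0 by simp
    finally have "c h0 mod p = 0" using A by metis
    then show "c h0 = 0" using A h0 by simp
  qed
  have gd: "Gdelta_dense (Zp_top p) H"
    unfolding Gdelta_dense_def
  proof (intro allI impI)
    fix S :: "('s \<Rightarrow> nat) set" assume S: "gdelta_in (Zp_top p) S \<and> S \<noteq> {}"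
    then obtain g0 where g0: "g0 \<in> S" by blast
    have top: "topspace (Zp_top p) = {f. \<forall>i. f i < p}"
      unfolding Zp_top_def by (auto simp: PiE_UNIV_domain)
    have "S \<subseteq> topspace (Zp_top p)" using conjunct1[OF S] unfolding gdelta_in_alt by (rule conjunct1)
    then have "g0 \<in> topspace (Zp_top p)" using g0 by (rule subsetD)
    then have g0p: "\<forall>i. g0 i < p" unfolding top by simp
    obtain J where J: "countable J" "\<forall>f. (\<forall>i. f i < p) \<and> (\<forall>j\<in>J. f j = g0 j) \<longrightarrow> f \<in> S"
      using cylinder[OF conjunct1[OF S] g0] by blast
    obtain y where y: "\<forall>j\<in>J. rho p emb req j y = g0 j mod p" using realize_cols[OF emb J(1) p0] by blast
    have "(\<forall>i. hf y i < p) \<and> (\<forall>j\<in>J. hf y j = g0 j)" using y g0p by (simp add: hfi rho_lt[OF p0])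
    then have "hf y \<in> S" using J(2) by blast
    moreover have "hf y \<in> H" unfolding H_def by simp
    ultimately show "H \<inter> S \<noteq> {}" by blast
  qed
  define K where "K = generate (Zp_group p) H"
  have grp: "group (Zp_group p :: ('s \<Rightarrow> nat) monoid)" using Zp_group[OF p0] .
  have Ksub: "subgroup K (Zp_group p)" unfolding K_def using group.generate_is_subgroup[OF grp Hc] .
  have subK: "subsp p K" unfolding subsp_def
  proof (intro conjI ballI allI)
    fix x i assume "x \<in> K" then show "x i < p" using subgroup.subset[OF Ksub] by (auto simp: Zp_carrier)
  next
    show "(\<lambda>i. 0) \<in> K" using subgroup.one_closed[OF Ksub] by (simp add: Zp_one)
  next
    fix x y assume "x \<in> K" "y \<in> K"
    then show "addp p x y \<in> K" using subgroup.m_closed[OF Ksub] by (simp add: Zp_mult addp_def)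
  qed
  have HK: "H \<subseteq> K" unfolding K_def by (auto intro: generate.incl)
  have Kspan: "K \<subseteq> spanp p H" unfolding K_def using gen_span[OF p0 Hc] .
  have ph: "property_h ((Zp_group p)\<lparr>carrier := K\<rparr>) (subtopology (Zp_top p) K)"
    unfolding property_h_def h_embedded_def
  proof (intro allI impI ballI)
    fix N \<phi>
    assume N: "subgroup N ((Zp_group p)\<lparr>carrier := K\<rparr>) \<and> countable N"
      and \<phi>: "\<phi> \<in> hom ((Zp_group p)\<lparr>carrier := K\<rparr>\<lparr>carrier := N\<rparr>) circle_group"
    have NK: "N \<subseteq> K" using subgroup.subset[OF conjunct1[OF N]] by simp
    have Nadd: "addp p x y \<in> N" if "x \<in> N" "y \<in> N" for x y
      using subgroup.m_closed[OF conjunct1[OF N] that] by (simp add: Zp_group_def addp_def)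
    have N0: "(\<lambda>i. 0) \<in> N" using subgroup.one_closed[OF conjunct1[OF N]] by (simp add: Zp_group_def)
    have subN: "subsp p N" unfolding subsp_def using N0 Nadd NK subsp_lt[OF subK] by blast
    have chN: "chr p N \<phi>" unfolding chr_def
    proof (intro conjI ballI)
      fix x assume "x \<in> N"
      then show "\<phi> x \<in> sphere 0 1" using \<phi> unfolding hom_def circle_group_def by auto
    next
      fix x y assume xy: "x \<in> N" "y \<in> N"
      have "\<phi> (x \<otimes>\<^bsub>(Zp_group p)\<lparr>carrier := K\<rparr>\<lparr>carrier := N\<rparr>\<^esub> y) = \<phi> x \<otimes>\<^bsub>circle_group\<^esub> \<phi> y"
        using \<phi> xy unfolding hom_def by simp
      then show "\<phi> (addp p x y) = \<phi> x * \<phi> y" by (simp add: Zp_group_def circle_group_def addp_def)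
    qed
    obtain ch where ch: "chr p K ch" "\<forall>x\<in>N. ch x = \<phi> x"
      using ext_char[OF p subK subN NK chN] by blast
    define rep where "rep = (\<lambda>x. SOME Fc. finite (fst Fc) \<and> fst Fc \<subseteq> H \<and>
        x = (\<lambda>i. (\<Sum>h\<in>fst Fc. snd Fc h * h i) mod p))"
    have rep: "finite (fst (rep x)) \<and> fst (rep x) \<subseteq> H \<and> x = (\<lambda>i. (\<Sum>h\<in>fst (rep x). snd (rep x) h * h i) mod p)"
      if xN: "x \<in> N" for x
    proof -
      have "x \<in> spanp p H" using xN NK Kspan by blast
      then obtain F c where "finite F" "F \<subseteq> H" "x = (\<lambda>i. (\<Sum>h\<in>F. c h * h i) mod p)"
        unfolding spanp_def by blast
      then have ex: "\<exists>Fc. finite (fst Fc) \<and> fst Fc \<subseteq> H \<and> x = (\<lambda>i. (\<Sum>h\<in>fst Fc. snd Fc h * h i) mod p)"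
        by (intro exI[of _ "(F, c)"]) simp
      show ?thesis unfolding rep_def using someI_ex[OF ex] .
    qed
    define Cset where "Cset = (\<Union>x\<in>N. fst (rep x))"
    have cC: "countable Cset" unfolding Cset_def
    proof (rule countable_UN[OF conjunct2[OF N]])
      fix x assume "x \<in> N" then show "countable (fst (rep x))" using rep countable_finite by blast
    qed
    have CH: "Cset \<subseteq> H" unfolding Cset_def using rep by blast
    define av where "av = (\<lambda>h. SOME j. j < p \<and> ch h = ze p j)"
    have av: "av h < p \<and> ch h = ze p (av h)" if "h \<in> K" for h
    proof -
      have "\<exists>j. j < p \<and> ch h = ze p j" using root_of_chr[OF ch(1) subK that p0] by blast
      then show ?thesis unfolding av_def by (rule someI_ex)
    qed
    define a where "a = (\<lambda>y. av (hf y))"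
    have "countable (yh ` Cset)" using cC by simp
    then obtain i where i: "\<forall>y\<in>yh ` Cset. rho p emb req i y = a y mod p"
      using realize_rows[OF req] by blast
    define \<psi> where "\<psi> = (\<lambda>x :: 's \<Rightarrow> nat. ze p (x i))"
    have chpsi: "chr p K \<psi>" unfolding \<psi>_def using psi_chr[OF p0] .
    have agreeC: "\<psi> h = ch h" if hC: "h \<in> Cset" for h
    proof -
      have hH: "h \<in> H" using hC CH by blast
      have hK: "h \<in> K" using hH HK by blast
      have "h i = rho p emb req i (yh h)" using yh[OF hH] hfi by metis
      also have "\<dots> = a (yh h) mod p" using i hC by blast
      also have "\<dots> = av h mod p" unfolding a_def using yh[OF hH] by simp
      also have "\<dots> = av h" using av[OF hK] by simp
      finally show ?thesis unfolding \<psi>_def using av[OF hK] by simp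
    qed
    show "\<exists>\<psi>\<in>hom ((Zp_group p)\<lparr>carrier := K\<rparr>) circle_group.
            continuous_map (subtopology (Zp_top p) K) (top_of_set (sphere 0 1)) \<psi> \<and>
            (\<forall>x\<in>N. \<psi> x = \<phi> x)"
    proof (intro bexI conjI ballI)
      show "\<psi> \<in> hom ((Zp_group p)\<lparr>carrier := K\<rparr>) circle_group"
        unfolding hom_def
      proof (intro CollectI conjI ballI)
        show "\<psi> \<in> carrier ((Zp_group p)\<lparr>carrier := K\<rparr>) \<rightarrow> carrier circle_group"
          unfolding \<psi>_def circle_group_def using ze_norm by simp
        fix x y assume "x \<in> carrier ((Zp_group p)\<lparr>carrier := K\<rparr>)" "y \<in> carrier ((Zp_group p)\<lparr>carrier := K\<rparr>)"
        then have xy: "x \<in> K" "y \<in> K" by simp_all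
        have "\<psi> (addp p x y) = \<psi> x * \<psi> y" using chr_mult[OF chpsi xy] .
        then show "\<psi> (x \<otimes>\<^bsub>(Zp_group p)\<lparr>carrier := K\<rparr>\<^esub> y) = \<psi> x \<otimes>\<^bsub>circle_group\<^esub> \<psi> y"
          by (simp add: Zp_group_def circle_group_def addp_def)
      qed
      show "continuous_map (subtopology (Zp_top p) K) (top_of_set (sphere 0 1)) \<psi>"
        unfolding \<psi>_def by (rule psi_cont)
      fix x assume xN: "x \<in> N"
      define F where "F = fst (rep x)"
      define c where "c = snd (rep x)"
      have Fx: "finite F" "F \<subseteq> H" "x = (\<lambda>i. (\<Sum>h\<in>F. c h * h i) mod p)"
        using rep[OF xN] unfolding F_def c_def by auto
      have FC: "F \<subseteq> Cset" unfolding Cset_def F_def using xN by blast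
      have FK: "F \<subseteq> K" using Fx(2) HK by blast
      have "\<psi> x = (\<Prod>h\<in>F. \<psi> h ^ c h)" using chr_sum[OF chpsi subK Fx(1) FK, of c] Fx(3) by simp
      also have "\<dots> = (\<Prod>h\<in>F. ch h ^ c h)" using agreeC FC by (intro prod.cong) auto
      also have "\<dots> = ch x" using chr_sum[OF ch(1) subK Fx(1) FK, of c] Fx(3) by simp
      also have "\<dots> = \<phi> x" using ch(2) xN by simp
      finally show "\<psi> x = \<phi> x" .
    qed
  qed
  show ?thesis
    using Hc indep gd ph unfolding K_def by blast
qed


end
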